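(* The Funk–Finsler metric $\mathcal{F}$ on the Klein unit disc $\mathbb{D}_K(1)$ is a Douglas metric which is not a Berwald metric.
   Context: $r=\frac{e^2-1}{e^2+1}$, $\mathbb{D}_K(1)=\{x\in\mathbb{R}^2:|x|<r\}$, and $\mathcal{F}(x,\xi)=\frac{\sqrt{(r^2-|x|^2)|\xi|^2+\langle x,\xi\rangle^2}}{r^2-|x|^2}+\frac{(1-r^2)\langle x,\xi\rangle}{(r^2-|x|^2)(1-|x|^2)}$. A Finsler metric is Berwald if its spray coefficients $G^i(x,\xi)$ are quadratic in $\xi$ at each $x$; it is Douglas if $G^i\xi^j-G^j\xi^i$ is a homogeneous polynomial of degree $3$ in $\xi$ at each $x$. Spray coefficients: $G^i=\frac14g^{i\ell}\{[F^2]_{x^k\xi^\ell}\xi^k-[F^2]_{x^\ell}\}$. *)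

theory Defs
  imports "HOL-Analysis.Analysis"
begin

definition rK :: real where
  "rK = (exp 2 - 1) / (exp 2 + 1)"

definition klein_disc :: "(real^2) set" where
  "klein_disc = {x. norm x < rK}"

definition funk_finsler :: "real^2 \<Rightarrow> real^2 \<Rightarrow> real" where
  "funk_finsler x xi =
     sqrt ((rK^2 - (norm x)^2) * (norm xi)^2 + (inner x xi)^2) / (rK^2 - (norm x)^2)
     + (1 - rK^2) * inner x xi / ((rK^2 - (norm x)^2) * (1 - (norm x)^2))"

definition dx :: "2 \<Rightarrow> (real^2 \<Rightarrow> real^2 \<Rightarrow> real) \<Rightarrow> real^2 \<Rightarrow> real^2 \<Rightarrow> real" where
  "dx k f x xi = deriv (\<lambda>t. f (x + t *\<^sub>R axis k 1) xi) 0"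

definition dxi :: "2 \<Rightarrow> (real^2 \<Rightarrow> real^2 \<Rightarrow> real) \<Rightarrow> real^2 \<Rightarrow> real^2 \<Rightarrow> real" where
  "dxi k f x xi = deriv (\<lambda>t. f x (xi + t *\<^sub>R axis k 1)) 0"

definition fund_tensor :: "(real^2 \<Rightarrow> real^2 \<Rightarrow> real) \<Rightarrow> real^2 \<Rightarrow> real^2 \<Rightarrow> real^2^2" where
  "fund_tensor F x xi =
     (\<chi> i j. (1/2) * dxi i (dxi j (\<lambda>x' xi'. (F x' xi')^2)) x xi)"

definition spray_coeff :: "(real^2 \<Rightarrow> real^2 \<Rightarrow> real) \<Rightarrow> 2 \<Rightarrow> real^2 \<Rightarrow> real^2 \<Rightarrow> real" where
  "spray_coeff F i x xi =
     (let E = (\<lambda>x' xi'. (F x' xi')^2);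
          ginv = matrix_inv (fund_tensor F x xi)
      in (1/4) * (\<Sum>l\<in>UNIV. ginv $ i $ l *
             ((\<Sum>k\<in>UNIV. dx k (dxi l E) x xi * xi $ k) - dx l E x xi)))"

text \<open>Berwald on U: at each x in U, each G^i is a quadratic form in xi
  (on the slit tangent space xi \<noteq> 0, where F is defined).\<close>

definition is_berwald_on :: "(real^2) set \<Rightarrow> (real^2 \<Rightarrow> real^2 \<Rightarrow> real) \<Rightarrow> bool" where
  "is_berwald_on U F \<longleftrightarrow>
     (\<forall>x\<in>U. \<forall>i. \<exists>c :: real^2^2. \<forall>xi. xi \<noteq> 0 \<longrightarrow>
        spray_coeff F i x xi = (\<Sum>j\<in>UNIV. \<Sum>k\<in>UNIV. c $ j $ k * xi $ j * xi $ k))"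

definition is_douglas_on :: "(real^2) set \<Rightarrow> (real^2 \<Rightarrow> real^2 \<Rightarrow> real) \<Rightarrow> bool" where
  "is_douglas_on U F \<longleftrightarrow>
     (\<forall>x\<in>U. \<forall>i j. \<exists>c :: real^2^2^2. \<forall>xi. xi \<noteq> 0 \<longrightarrow>
        spray_coeff F i x xi * xi $ j - spray_coeff F j x xi * xi $ i
        = (\<Sum>a\<in>UNIV. \<Sum>b\<in>UNIV. \<Sum>d\<in>UNIV. c $ a $ b $ d * xi $ a * xi $ b * xi $ d))"

end

theory Submission
  imports Defs
begin


definition "cK = 1 - rK^2"
definition sx :: "real^2 \<Rightarrow> real" where "sx x = rK^2 - x \<bullet> x"
definition qx :: "real^2 \<Rightarrow> real" where "qx x = 1 - x \<bullet> x"
definition KK :: "real^2 \<Rightarrow> real^2 \<Rightarrow> real" where "KK x xi = sx x * (xi \<bullet> xi) + (x \<bullet> xi)^2"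
definition SS :: "real^2 \<Rightarrow> real^2 \<Rightarrow> real" where "SS x xi = sqrt (KK x xi)"
definition FF :: "real^2 \<Rightarrow> real^2 \<Rightarrow> real" where
  "FF x xi = SS x xi / sx x + cK * (x \<bullet> xi) / (sx x * qx x)"

lemma rK_pos: "0 < rK" and rK_lt1: "rK < 1"
proof -
  have e: "exp (2::real) > 1" by simp
  show "0 < rK" using e exp_gt_zero[of "2::real"] unfolding rK_def by (smt (verit) divide_pos_pos)
  have p: "exp (2::real) + 1 > 0" using exp_gt_zero[of "2::real"] by linarith
  show "rK < 1" using e p by (simp add: rK_def divide_less_eq)
qed

definition Uxi :: "real^2 \<Rightarrow> real^2 \<Rightarrow> real^2" where
  "Uxi x xi = (1 / SS x xi) *\<^sub>R xi + ((x \<bullet> xi) / (sx x * SS x xi) + cK / (sx x * qx x)) *\<^sub>R x"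

definition Ux :: "real^2 \<Rightarrow> real^2 \<Rightarrow> real^2" where
  "Ux x xi = ((x \<bullet> xi) / (sx x * SS x xi) + cK / (sx x * qx x)) *\<^sub>R xi
     + (2 * SS x xi / (sx x)^2 - (xi \<bullet> xi) / (sx x * SS x xi)
        + 2 * cK * (x \<bullet> xi) * (sx x + qx x) / (sx x * qx x)^2) *\<^sub>R x"

definition Uxixi :: "real^2 \<Rightarrow> real^2 \<Rightarrow> real^2 \<Rightarrow> real^2" where
  "Uxixi x xi h = (let A = sx x * (xi \<bullet> h) + (x \<bullet> xi) * (x \<bullet> h); S = SS x xi in
     (1 / S) *\<^sub>R h - (A / S^3) *\<^sub>R xi + ((x \<bullet> h) / (sx x * S) - (x \<bullet> xi) * A / (sx x * S^3)) *\<^sub>R x)"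

definition Uxxi :: "real^2 \<Rightarrow> real^2 \<Rightarrow> real^2 \<Rightarrow> real^2" where
  "Uxxi x xi h = (let m = xi \<bullet> h; p = x \<bullet> h; L = x \<bullet> xi; N = xi \<bullet> xi; S = SS x xi;
       s = sx x; q = qx x; c = cK;
       cs = - m * N / (2 * S^3) - L * p / (s^2 * S) - L * p * N / (2 * s * S^3) - c * p / (s^2 * q);
       cq = - c * p / (s * q^2);
       cL = - m * L / S^3 + p / (s * S) - L^2 * p / (s * S^3);
       cp = L / (s * S) + c / (s * q)
     in (-2 * (cs + cq)) *\<^sub>R x + cL *\<^sub>R xi + cp *\<^sub>R h)"

lemma sx_line: "sx (x + t *\<^sub>R k) = sx x - (2*t*(x\<bullet>k) + t^2*(k\<bullet>k))"
  by (simp add: sx_def inner_add_left inner_add_right inner_commute algebra_simps power2_eq_square)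
lemma qx_line: "qx (x + t *\<^sub>R k) = qx x - (2*t*(x\<bullet>k) + t^2*(k\<bullet>k))"
  by (simp add: qx_def inner_add_left inner_add_right inner_commute algebra_simps power2_eq_square)

lemma dom_facts:
  assumes "x \<bullet> x < rK^2" "xi \<noteq> 0"
  shows "sx x > 0" "qx x > 0" "KK x xi > 0" "SS x xi > 0"
proof -
  show s: "sx x > 0" using assms by (simp add: sx_def)
  show "qx x > 0" using assms rK_lt1 rK_pos unfolding qx_def
    by (smt (verit) power_strict_mono power_le_one)
  show K: "KK x xi > 0" using s assms(2) by (simp add: KK_def add_pos_nonneg)
  then show "SS x xi > 0" by (simp add: SS_def)
qed

lemma KS: "KK x xi > 0 \<Longrightarrow> sx x * (xi \<bullet> xi) + (x \<bullet> xi)^2 = SS x xi ^ 2"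
  by (simp add: SS_def KK_def)

lemma KS2: "KK x xi > 0 \<Longrightarrow> 2 * (sx x * (xi \<bullet> xi)) + 2 * (x \<bullet> xi)^2 = 2 * SS x xi ^ 2"
  by (simp add: SS_def KK_def)

lemma dF_xi:
  fixes x xi h :: "real^2"
  assumes "x \<bullet> x < rK^2" "xi \<noteq> 0"
  shows "((\<lambda>t. FF x (xi + t *\<^sub>R h)) has_real_derivative Uxi x xi \<bullet> h) (at 0)"
proof -
  note d = dom_facts[OF assms]
  have eq: "(\<lambda>t. FF x (xi + t *\<^sub>R h)) = (\<lambda>t. sqrt (sx x * (xi\<bullet>xi + 2*t*(xi\<bullet>h) + t^2*(h\<bullet>h)) + (x\<bullet>xi + t*(x\<bullet>h))^2) / sx x + cK*(x\<bullet>xi + t*(x\<bullet>h))/(sx x * qx x))"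
    by (auto simp: fun_eq_iff FF_def SS_def KK_def inner_add_right inner_commute algebra_simps power2_eq_square)
  show ?thesis unfolding eq
    using d apply (auto intro!: derivative_eq_intros simp: KK_def)
    apply (simp add: Uxi_def SS_def KK_def inner_add_left inner_scaleR_left)
    apply (simp add: field_simps inner_commute)
    done
qed

lemma dF_x:
  fixes x xi k :: "real^2"
  assumes "x \<bullet> x < rK^2" "xi \<noteq> 0"
  shows "((\<lambda>t. FF (x + t *\<^sub>R k) xi) has_real_derivative Ux x xi \<bullet> k) (at 0)"
proof -
  note d = dom_facts[OF assms]
  have eq: "(\<lambda>t. FF (x + t *\<^sub>R k) xi) = (\<lambda>t. sqrt ((sx x - (2*t*(x\<bullet>k) + t^2*(k\<bullet>k))) * (xi\<bullet>xi) + (x\<bullet>xi + t*(k\<bullet>xi))^2)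
       / (sx x - (2*t*(x\<bullet>k) + t^2*(k\<bullet>k)))
     + cK*(x\<bullet>xi + t*(k\<bullet>xi))/((sx x - (2*t*(x\<bullet>k) + t^2*(k\<bullet>k))) * (qx x - (2*t*(x\<bullet>k) + t^2*(k\<bullet>k)))))"
    by (auto simp: fun_eq_iff FF_def SS_def KK_def sx_def qx_def inner_add_left inner_add_right inner_commute algebra_simps power2_eq_square)
  show ?thesis unfolding eq
    using d apply (auto intro!: derivative_eq_intros simp: KK_def)
    apply (simp only: SS_def[unfolded KK_def, symmetric])
    apply (simp only: KS[OF d(3)])
    apply (simp add: Ux_def inner_add_left inner_scaleR_left)
    using d apply (simp add: field_simps inner_commute power2_eq_square power3_eq_cube)
    done
qed

lemma dU_xi:
  fixes x xi h1 h2 :: "real^2"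
  assumes "x \<bullet> x < rK^2" "xi \<noteq> 0"
  shows "((\<lambda>t. Uxi x (xi + t *\<^sub>R h2) \<bullet> h1) has_real_derivative Uxixi x xi h2 \<bullet> h1) (at 0)"
proof -
  note d = dom_facts[OF assms]
  have eq: "(\<lambda>t. Uxi x (xi + t *\<^sub>R h2) \<bullet> h1) = (\<lambda>t.
     (xi\<bullet>h1 + t*(h2\<bullet>h1)) / sqrt (sx x * (xi\<bullet>xi + 2*t*(xi\<bullet>h2) + t^2*(h2\<bullet>h2)) + (x\<bullet>xi + t*(x\<bullet>h2))^2)
     + ((x\<bullet>xi + t*(x\<bullet>h2)) / (sx x * sqrt (sx x * (xi\<bullet>xi + 2*t*(xi\<bullet>h2) + t^2*(h2\<bullet>h2)) + (x\<bullet>xi + t*(x\<bullet>h2))^2))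
        + cK / (sx x * qx x)) * (x\<bullet>h1))"
    by (auto simp: fun_eq_iff Uxi_def SS_def KK_def inner_add_left inner_add_right inner_scaleR_left inner_scaleR_right
        inner_commute algebra_simps power2_eq_square add_divide_distrib)
  show ?thesis unfolding eq
    using d apply (auto intro!: derivative_eq_intros simp: KK_def)
    apply (simp only: SS_def[unfolded KK_def, symmetric])
    apply (simp only: KS[OF d(3)])
    apply (simp add: Uxixi_def Let_def inner_add_left inner_diff_left inner_scaleR_left)
    using d apply (simp add: field_simps inner_commute power2_eq_square power3_eq_cube)
    done
qed

lemma dU_x:
  fixes x xi h k :: "real^2"
  assumes "x \<bullet> x < rK^2" "xi \<noteq> 0"
  shows "((\<lambda>t. Uxi (x + t *\<^sub>R k) xi \<bullet> h) has_real_derivative Uxxi x xi h \<bullet> k) (at 0)"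
proof -
  note d = dom_facts[OF assms]
  have eq: "(\<lambda>t. Uxi (x + t *\<^sub>R k) xi \<bullet> h) = (\<lambda>t.
     (1 / sqrt ((sx x - (2*t*(x\<bullet>k) + t^2*(k\<bullet>k))) * (xi\<bullet>xi) + (x\<bullet>xi + t*(k\<bullet>xi))^2)) * (xi\<bullet>h)
     + ((x\<bullet>xi + t*(k\<bullet>xi)) / ((sx x - (2*t*(x\<bullet>k) + t^2*(k\<bullet>k))) * sqrt ((sx x - (2*t*(x\<bullet>k) + t^2*(k\<bullet>k))) * (xi\<bullet>xi) + (x\<bullet>xi + t*(k\<bullet>xi))^2))
        + cK / ((sx x - (2*t*(x\<bullet>k) + t^2*(k\<bullet>k))) * (qx x - (2*t*(x\<bullet>k) + t^2*(k\<bullet>k))))) * (x\<bullet>h + t*(k\<bullet>h)))"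
    by (simp add: fun_eq_iff Uxi_def SS_def KK_def sx_line qx_line inner_add_left inner_scaleR_left)
  show ?thesis unfolding eq
    using d apply (auto intro!: derivative_eq_intros simp: KK_def)
    apply (simp only: SS_def[unfolded KK_def, symmetric])
    apply (simp only: KS[OF d(3)])
    apply (simp add: Uxxi_def Let_def inner_add_left inner_diff_left inner_scaleR_left)
    apply (simp only: KS2[OF d(3)])
    using d apply (simp add: field_simps inner_commute power2_eq_square power3_eq_cube)
    done
qed

lemma ev_nz:
  fixes xi h :: "real^2"
  assumes "xi \<noteq> 0"
  shows "eventually (\<lambda>t. xi + t *\<^sub>R h \<noteq> 0) (nhds (0::real))"
proof -
  have "((\<lambda>t::real. norm (xi + t *\<^sub>R h)) \<longlongrightarrow> norm (xi + 0 *\<^sub>R h)) (nhds 0)"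
    by (intro tendsto_intros filterlim_ident)
  then have "eventually (\<lambda>t. 0 < norm (xi + t *\<^sub>R h)) (nhds (0::real))"
    using assms by (intro order_tendstoD(1)) auto
  then show ?thesis by (rule eventually_mono) auto
qed

lemma ev_in:
  fixes x h :: "real^2"
  assumes "x \<bullet> x < c"
  shows "eventually (\<lambda>t. (x + t *\<^sub>R h) \<bullet> (x + t *\<^sub>R h) < c) (nhds (0::real))"
proof -
  have "((\<lambda>t::real. (x + t *\<^sub>R h) \<bullet> (x + t *\<^sub>R h)) \<longlongrightarrow> (x + 0 *\<^sub>R h) \<bullet> (x + 0 *\<^sub>R h)) (nhds 0)"
    by (intro tendsto_intros filterlim_ident)
  then show ?thesis
    using assms by (intro order_tendstoD(2)) auto
qed

lemma funk_eq: "funk_finsler = FF"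
  by (auto simp: fun_eq_iff funk_finsler_def FF_def SS_def KK_def sx_def qx_def cK_def power2_norm_eq_inner)

lemma inner2: "(a::real^2) \<bullet> b = a$1*b$1 + a$2*b$2"
  by (simp add: inner_vec_def sum_2)

lemma E1: assumes "x \<bullet> x < rK^2" "xi \<noteq> 0" shows "Uxi x xi \<bullet> xi = FF x xi"
proof -
  note d = dom_facts[OF assms]
  have K: "SS x xi ^ 2 = sx x * (xi \<bullet> xi) + (x \<bullet> xi)^2" using KS[OF d(3)] by simp
  show ?thesis using d(1,2,4) K
    apply (simp add: Uxi_def FF_def inner_add_left inner_scaleR_left)
    by (simp add: inner_commute field_simps power2_eq_square)
qed

lemma E2b: "S \<noteq> 0 \<Longrightarrow> s \<noteq> 0 \<Longrightarrow>
  (1/S)*m - ((s*m + L*p)/S^3)*((S^2 - L^2)/s) + (p/(s*S) - L*(s*m+L*p)/(s*S^3))*L = (0::real)"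
  by (simp add: field_simps power2_eq_square power3_eq_cube)

lemma E2: assumes "x \<bullet> x < rK^2" "xi \<noteq> 0" shows "Uxixi x xi h \<bullet> xi = 0"
proof -
  note d = dom_facts[OF assms]
  have K: "SS x xi ^ 2 = sx x * (xi \<bullet> xi) + (x \<bullet> xi)^2" using KS[OF d(3)] by simp
  have "Uxixi x xi h \<bullet> xi = (1/SS x xi)*(xi\<bullet>h) - ((sx x*(xi\<bullet>h) + (x\<bullet>xi)*(x\<bullet>h))/SS x xi^3)*(xi\<bullet>xi)
     + ((x\<bullet>h)/(sx x*SS x xi) - (x\<bullet>xi)*(sx x*(xi\<bullet>h)+(x\<bullet>xi)*(x\<bullet>h))/(sx x*SS x xi^3))*(x\<bullet>xi)"
    apply (simp add: Uxixi_def Let_def inner_add_left inner_diff_left inner_scaleR_left)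
    by (simp add: inner_commute)
  also have "\<dots> = (1/SS x xi)*(xi\<bullet>h) - ((sx x*(xi\<bullet>h) + (x\<bullet>xi)*(x\<bullet>h))/SS x xi^3)*((SS x xi^2 - (x\<bullet>xi)^2)/sx x)
     + ((x\<bullet>h)/(sx x*SS x xi) - (x\<bullet>xi)*(sx x*(xi\<bullet>h)+(x\<bullet>xi)*(x\<bullet>h))/(sx x*SS x xi^3))*(x\<bullet>xi)"
    using K d(1) by simp
  also have "\<dots> = 0" by (rule E2b) (use d in auto)
  finally show ?thesis .
qed

lemma Ham: assumes "x \<bullet> x < rK^2" "xi \<noteq> 0" shows "Uxxi x xi h \<bullet> xi = Ux x xi \<bullet> h"
proof -
  note d = dom_facts[OF assms]
  have K: "SS x xi ^ 2 = sx x * (xi \<bullet> xi) + (x \<bullet> xi)^2" using KS[OF d(3)] by simp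
  show ?thesis using d(1,2,4)
    apply (simp add: Uxxi_def Ux_def Let_def inner_add_left inner_diff_left inner_scaleR_left)
    apply (simp add: inner_commute field_simps)
    using K by algebra
qed

definition pp :: "real^2 \<Rightarrow> 2 \<Rightarrow> real" where
  "pp xi k = (if k = 1 then - (xi$2) else xi$1)"

lemma Hfrac: "S \<noteq> 0 \<Longrightarrow> s \<noteq> 0 \<Longrightarrow>
  d/S - ((s*ui + L*ai)/S^3)*uj + (ai/(s*S) - L*(s*ui+L*ai)/(s*S^3))*aj
   = (S^2*(s*d + ai*aj) - (s*ui+L*ai)*(s*uj+L*aj))/(s*S^3)"
  for S s d ui uj ai aj L :: real
  by (simp add: field_simps power2_eq_square power3_eq_cube)

lemma Hnum:
  fixes S s u y a b :: real
  assumes "S^2 = s * (u*u + y*y) + (a*u + b*y)^2"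
  shows "S^2*(s*1 + a*a) - (s*u+(a*u + b*y)*a)*(s*u+(a*u + b*y)*a) = s*(s + (a*a+b*b))*((-y)*(-y))"
    and "S^2*(s*0 + a*b) - (s*u+(a*u + b*y)*a)*(s*y+(a*u + b*y)*b) = s*(s + (a*a+b*b))*((-y)*u)"
    and "S^2*(s*0 + b*a) - (s*y+(a*u + b*y)*b)*(s*u+(a*u + b*y)*a) = s*(s + (a*a+b*b))*(u*(-y))"
    and "S^2*(s*1 + b*b) - (s*y+(a*u + b*y)*b)*(s*y+(a*u + b*y)*b) = s*(s + (a*a+b*b))*(u*u)"
  using assms by algebra+

lemma axis_ne: "i \<noteq> j \<Longrightarrow> axis i (1::real) $ j = 0"
  by (simp add: axis_def)

lemma Hc: assumes "x \<bullet> x < rK^2" "xi \<noteq> 0"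
  shows "Uxixi x xi (axis i 1) \<bullet> axis j 1 = (sx x + (x$1*x$1 + x$2*x$2)) / SS x xi ^ 3 * (pp xi i * pp xi j)"
proof -
  note d = dom_facts[OF assms]
  have K: "SS x xi ^ 2 = sx x * (xi$1*xi$1 + xi$2*xi$2) + (x$1*xi$1 + x$2*xi$2)^2"
    using KS[OF d(3)] by (simp add: inner2)
  let ?S = "SS x xi" and ?s = "sx x" and ?L = "x$1*xi$1 + x$2*xi$2"
  have S0: "?S \<noteq> 0" using d(4) by simp
  have s0: "?s \<noteq> 0" using d(1) by simp
  have ex: "Uxixi x xi (axis i 1) \<bullet> axis j 1 = (if i = j then 1 else 0)/?S
     - ((?s*xi$i + ?L*x$i)/?S^3)*xi$j + (x$i/(?s*?S) - ?L*(?s*xi$i+?L*x$i)/(?s*?S^3))*x$j"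
    by (simp add: Uxixi_def Let_def inner_add_left inner_diff_left inner_scaleR_left inner_axis_axis inner_axis
        inner2[of x xi] inner_axis' axis_ne)
  also have "\<dots> = (?S^2*(?s*(if i = j then 1 else 0) + x$i*x$j) - (?s*xi$i+?L*x$i)*(?s*xi$j+?L*x$j))/(?s*?S^3)"
    by (rule Hfrac[OF S0 s0])
  also have "\<dots> = ?s*(?s + (x$1*x$1 + x$2*x$2))*(pp xi i * pp xi j)/(?s*?S^3)"
  proof -
    have ij: "(i = 1 \<or> i = 2) \<and> (j = 1 \<or> j = 2)" using exhaust_2 by blast
    then consider "i = 1" "j = 1" | "i = 1" "j = 2" | "i = 2" "j = 1" | "i = 2" "j = 2" by blast
    then show ?thesis
    proof cases
      case 1 then show ?thesis using Hnum(1)[OF K] by (simp add: pp_def)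
    next
      case 2 then show ?thesis using Hnum(2)[OF K] by (simp add: pp_def)
    next
      case 3 then show ?thesis using Hnum(3)[OF K] by (simp add: pp_def)
    next
      case 4 then show ?thesis using Hnum(4)[OF K] by (simp add: pp_def)
    qed
  qed
  also have "\<dots> = (?s + (x$1*x$1 + x$2*x$2)) / ?S ^ 3 * (pp xi i * pp xi j)"
    using s0 S0 by (simp add: field_simps)
  finally show ?thesis .
qed



abbreviation "EE \<equiv> (\<lambda>x' xi'. (funk_finsler x' xi')^2)"

lemma dxiE: assumes "x \<bullet> x < rK^2" "xi \<noteq> 0"
  shows "dxi j EE x xi = 2 * FF x xi * (Uxi x xi \<bullet> axis j 1)"
proof -
  have "((\<lambda>t. (FF x (xi + t *\<^sub>R axis j 1))^2) has_real_derivative 2 * FF x xi * (Uxi x xi \<bullet> axis j 1)) (at 0)"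
    by (auto intro!: derivative_eq_intros dF_xi[OF assms])
  then show ?thesis unfolding dxi_def funk_eq by (rule DERIV_imp_deriv)
qed

lemma dxE: assumes "x \<bullet> x < rK^2" "xi \<noteq> 0"
  shows "dx j EE x xi = 2 * FF x xi * (Ux x xi \<bullet> axis j 1)"
proof -
  have "((\<lambda>t. (FF (x + t *\<^sub>R axis j 1) xi)^2) has_real_derivative 2 * FF x xi * (Ux x xi \<bullet> axis j 1)) (at 0)"
    by (auto intro!: derivative_eq_intros dF_x[OF assms])
  then show ?thesis unfolding dx_def funk_eq by (rule DERIV_imp_deriv)
qed

lemma g_entry: assumes "x \<bullet> x < rK^2" "xi \<noteq> 0"
  shows "fund_tensor funk_finsler x xi $ i $ j
     = (Uxi x xi \<bullet> axis i 1) * (Uxi x xi \<bullet> axis j 1) + FF x xi * (Uxixi x xi (axis i 1) \<bullet> axis j 1)"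
proof -
  have ev: "eventually (\<lambda>t. dxi j EE x (xi + t *\<^sub>R axis i 1)
      = 2 * FF x (xi + t *\<^sub>R axis i 1) * (Uxi x (xi + t *\<^sub>R axis i 1) \<bullet> axis j 1)) (nhds 0)"
    using ev_nz[OF assms(2), of "axis i 1"] by (rule eventually_mono) (rule dxiE[OF assms(1)])
  have D: "((\<lambda>t. 2 * FF x (xi + t *\<^sub>R axis i 1) * (Uxi x (xi + t *\<^sub>R axis i 1) \<bullet> axis j 1))
     has_real_derivative 2 * ((Uxi x xi \<bullet> axis i 1) * (Uxi x xi \<bullet> axis j 1) + FF x xi * (Uxixi x xi (axis i 1) \<bullet> axis j 1))) (at 0)"
    by (auto intro!: derivative_eq_intros dF_xi[OF assms] dU_xi[OF assms] simp: algebra_simps)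
  have D2: "((\<lambda>t. dxi j EE x (xi + t *\<^sub>R axis i 1))
     has_real_derivative 2 * ((Uxi x xi \<bullet> axis i 1) * (Uxi x xi \<bullet> axis j 1) + FF x xi * (Uxixi x xi (axis i 1) \<bullet> axis j 1))) (at 0)"
    using DERIV_cong_ev[OF refl ev refl] D by simp
  have "dxi i (dxi j EE) x xi = deriv (\<lambda>t. dxi j EE x (xi + t *\<^sub>R axis i 1)) 0"
    unfolding dxi_def[of i "dxi j EE" x xi] ..
  also have "\<dots> = 2 * ((Uxi x xi \<bullet> axis i 1) * (Uxi x xi \<bullet> axis j 1) + FF x xi * (Uxixi x xi (axis i 1) \<bullet> axis j 1))"
    using D2 by (rule DERIV_imp_deriv)
  finally show ?thesis unfolding fund_tensor_def by simp
qed

lemma dxdxiE: assumes "x \<bullet> x < rK^2" "xi \<noteq> 0"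
  shows "dx k (dxi l EE) x xi
     = 2 * ((Ux x xi \<bullet> axis k 1) * (Uxi x xi \<bullet> axis l 1) + FF x xi * (Uxxi x xi (axis l 1) \<bullet> axis k 1))"
proof -
  have ev: "eventually (\<lambda>t. dxi l EE (x + t *\<^sub>R axis k 1) xi
      = 2 * FF (x + t *\<^sub>R axis k 1) xi * (Uxi (x + t *\<^sub>R axis k 1) xi \<bullet> axis l 1)) (nhds 0)"
    using ev_in[OF assms(1), of "axis k 1"] by (rule eventually_mono) (rule dxiE[OF _ assms(2)])
  have D: "((\<lambda>t. 2 * FF (x + t *\<^sub>R axis k 1) xi * (Uxi (x + t *\<^sub>R axis k 1) xi \<bullet> axis l 1))
     has_real_derivative 2 * ((Ux x xi \<bullet> axis k 1) * (Uxi x xi \<bullet> axis l 1) + FF x xi * (Uxxi x xi (axis l 1) \<bullet> axis k 1))) (at 0)"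
    by (auto intro!: derivative_eq_intros dF_x[OF assms] dU_x[OF assms] simp: algebra_simps)
  have D2: "((\<lambda>t. dxi l EE (x + t *\<^sub>R axis k 1) xi)
     has_real_derivative 2 * ((Ux x xi \<bullet> axis k 1) * (Uxi x xi \<bullet> axis l 1) + FF x xi * (Uxxi x xi (axis l 1) \<bullet> axis k 1))) (at 0)"
    using DERIV_cong_ev[OF refl ev refl] D by simp
  have "dx k (dxi l EE) x xi = deriv (\<lambda>t. dxi l EE (x + t *\<^sub>R axis k 1) xi) 0"
    unfolding dx_def[of k "dxi l EE" x xi] ..
  also have "\<dots> = 2 * ((Ux x xi \<bullet> axis k 1) * (Uxi x xi \<bullet> axis l 1) + FF x xi * (Uxxi x xi (axis l 1) \<bullet> axis k 1))"
    using D2 by (rule DERIV_imp_deriv)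
  finally show ?thesis .
qed

lemma FF_pos: assumes "x \<bullet> x < rK^2" "xi \<noteq> 0" shows "FF x xi > 0"
proof -
  note d = dom_facts[OF assms]
  have K: "SS x xi ^ 2 = sx x * (xi \<bullet> xi) + (x \<bullet> xi)^2" using KS[OF d(3)] by simp
  have r1: "rK^2 < 1" using power_strict_mono[OF rK_lt1, of 2] rK_pos by simp
  have c0: "0 \<le> cK" using r1 unfolding cK_def by simp
  have cq: "cK \<le> qx x" using assms unfolding cK_def qx_def by simp
  have N: "xi \<bullet> xi > 0" using assms(2) by simp
  have a: "cK^2 \<le> (qx x)^2" using power_mono[OF cq c0, of 2] by simp
  have "(cK * (x \<bullet> xi))^2 \<le> (qx x * (x \<bullet> xi))^2"
    unfolding power_mult_distrib using a by (rule mult_right_mono) simp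
  also have "\<dots> < (qx x * SS x xi)^2"
  proof -
    have "0 < (qx x)^2 * (sx x * (xi \<bullet> xi))" using d(1,2) N by simp
    then show ?thesis unfolding power_mult_distrib K by (simp add: algebra_simps)
  qed
  finally have lt: "\<bar>cK * (x \<bullet> xi)\<bar>^2 < (qx x * SS x xi)^2" by simp
  have "\<bar>cK * (x \<bullet> xi)\<bar> < qx x * SS x xi"
    by (rule power2_less_imp_less[OF lt]) (use d(2,4) in simp)
  then have "0 < SS x xi * qx x + cK * (x \<bullet> xi)" by (simp add: mult.commute)
  then show ?thesis using d(1,2) unfolding FF_def by (simp add: field_simps)
qed

lemma spray:
  assumes A: "x \<bullet> x < rK^2" "xi \<noteq> 0"
  shows "spray_coeff funk_finsler i x xi = (Ux x xi \<bullet> xi) / (2 * FF x xi) * xi$i"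
proof -
  define g where "g = fund_tensor funk_finsler x xi"
  define F where "F = FF x xi"
  define P where "P = Ux x xi \<bullet> xi"
  define u where "u = Uxi x xi"
  define M where "M = matrix_inv g"
  have Fp: "F > 0" using FF_pos[OF A] by (simp add: F_def)
  have wl: "(\<Sum>k\<in>UNIV. dx k (dxi l EE) x xi * xi$k) - dx l EE x xi = 2 * P * (u \<bullet> axis l 1)" for l
  proof -
    define Z where "Z = Uxxi x xi (axis l 1)"
    have H: "Z$1 * xi$1 + Z$2 * xi$2 = Ux x xi $ l"
      using Ham[OF A, of "axis l 1"] by (simp add: Z_def inner2[of _ xi] inner_axis)
    have PP: "P = Ux x xi $ 1 * xi$1 + Ux x xi $ 2 * xi$2" by (simp add: P_def inner2)
    have "(\<Sum>k\<in>UNIV. dx k (dxi l EE) x xi * xi$k) - dx l EE x xi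
       = 2 * ((Ux x xi $ 1) * (u $ l) + F * (Z $ 1)) * xi$1 + 2 * ((Ux x xi $ 2) * (u $ l) + F * (Z $ 2)) * xi$2
         - 2 * F * (Ux x xi $ l)"
      by (simp add: sum_2 dxdxiE[OF A] dxE[OF A] inner_axis F_def u_def Z_def)
    also have "\<dots> = 2 * P * (u $ l)" unfolding PP H[symmetric] by (simp add: algebra_simps)
    finally show ?thesis by (simp add: inner_axis)
  qed
  have gx: "(g *v xi)$l = F * (u \<bullet> axis l 1)" for l
  proof -
    define Y where "Y = Uxixi x xi (axis l 1)"
    have e2: "Y$1 * xi$1 + Y$2 * xi$2 = 0" using E2[OF A, of "axis l 1"] by (simp add: Y_def inner2)
    have e1: "u$1 * xi$1 + u$2 * xi$2 = F" using E1[OF A] by (simp add: u_def F_def inner2)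
    have "(g *v xi)$l = (u$l * u$1 + F * Y$1) * xi$1 + (u$l * u$2 + F * Y$2) * xi$2"
      by (simp add: g_def matrix_vector_mult_def sum_2 g_entry[OF A] inner_axis u_def F_def Y_def)
    also have "\<dots> = u$l * (u$1 * xi$1 + u$2 * xi$2) + F * (Y$1 * xi$1 + Y$2 * xi$2)"
      by (simp add: algebra_simps)
    also have "\<dots> = F * u$l" unfolding e1 e2 by simp
    finally show ?thesis by (simp add: inner_axis)
  qed
  have inv: "M ** g = mat 1"
  proof -
    define mu where "mu = (sx x + (x$1*x$1 + x$2*x$2)) / SS x xi ^ 3"
    note d = dom_facts[OF A]
    have mup: "mu > 0" unfolding mu_def using d(1,4) by (intro divide_pos_pos add_pos_nonneg) auto
    have e1: "u$1 * xi$1 + u$2 * xi$2 = F" using E1[OF A] by (simp add: u_def F_def inner2)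
    have Hc': "Uxixi x xi (axis a 1) $ b = mu * (pp xi a * pp xi b)" for a b
      using Hc[OF A, of a b] by (simp add: inner_axis mu_def)
    have ge: "g$a$b = u$a * u$b + F * (mu * (pp xi a * pp xi b))" for a b
      by (simp add: g_def g_entry[OF A] Hc' inner_axis u_def F_def)
    have "det g = F * mu * (u$1 * xi$1 + u$2 * xi$2)^2"
      unfolding det_2 ge by (simp add: pp_def algebra_simps power2_eq_square)
    also have "\<dots> = F^3 * mu" using e1 by (simp add: power2_eq_square power3_eq_cube)
    finally have "det g \<noteq> 0" using Fp mup by simp
    then have "invertible g" by (simp add: invertible_det_nz)
    then have "\<exists>A'. g ** A' = mat 1 \<and> A' ** g = mat 1" unfolding invertible_def by blast
    from someI_ex[OF this] show ?thesis unfolding M_def matrix_inv_def by blast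
  qed
  have "spray_coeff funk_finsler i x xi = (1/4) * (\<Sum>l\<in>UNIV. M $ i $ l * (2 * P * (u \<bullet> axis l 1)))"
    unfolding spray_coeff_def Let_def M_def g_def by (simp add: wl)
  also have "\<dots> = (1/4) * (2 * P / F) * (\<Sum>l\<in>UNIV. M $ i $ l * (g *v xi)$l)"
    using Fp by (simp add: gx sum_distrib_left algebra_simps)
  also have "(\<Sum>l\<in>UNIV. M $ i $ l * (g *v xi)$l) = (M *v (g *v xi))$i"
    by (simp add: matrix_vector_mult_def)
  also have "\<dots> = xi$i" by (simp add: matrix_vector_mul_assoc inv)
  finally show ?thesis by (simp add: P_def F_def)
qed

lemma in_disc: "x \<in> klein_disc \<Longrightarrow> x \<bullet> x < rK^2"
proof -
  assume "x \<in> klein_disc"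
  then have "norm x < rK" by (simp add: klein_disc_def)
  then have "norm x ^ 2 < rK ^ 2" by (intro power_strict_mono) auto
  then show ?thesis by (simp add: power2_norm_eq_inner)
qed

lemma spray0:
  assumes "xi \<bullet> xi = 1"
  shows "(Ux 0 xi \<bullet> xi) / (2 * FF 0 xi) = cK / (2 * rK)"
proof -
  have s0: "sx 0 = rK^2" "qx 0 = 1" by (simp_all add: sx_def qx_def)
  have S0: "SS 0 xi = rK" using rK_pos assms by (simp add: SS_def KK_def s0)
  have a: "Ux 0 xi \<bullet> xi = cK / rK^2" using assms by (simp add: Ux_def s0 S0 inner_add_left)
  have b: "FF 0 xi = 1 / rK" using rK_pos by (simp add: FF_def S0 s0 power2_eq_square)
  show ?thesis unfolding a b using rK_pos by (simp add: field_simps power2_eq_square)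
qed

theorem corollary4p1:
  shows "is_douglas_on klein_disc funk_finsler \<and> \<not> is_berwald_on klein_disc funk_finsler"
proof
  show "is_douglas_on klein_disc funk_finsler"
    unfolding is_douglas_on_def
  proof (intro ballI allI)
    fix x i j assume "x \<in> klein_disc"
    then have X: "x \<bullet> x < rK^2" by (rule in_disc)
    show "\<exists>c :: real^2^2^2. \<forall>xi. xi \<noteq> 0 \<longrightarrow>
        spray_coeff funk_finsler i x xi * xi $ j - spray_coeff funk_finsler j x xi * xi $ i
        = (\<Sum>a\<in>UNIV. \<Sum>b\<in>UNIV. \<Sum>d\<in>UNIV. c $ a $ b $ d * xi $ a * xi $ b * xi $ d)"
      by (rule exI[of _ 0]) (auto simp: spray[OF X])
  qed
  show "\<not> is_berwald_on klein_disc funk_finsler"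
  proof
    assume "is_berwald_on klein_disc funk_finsler"
    moreover have "(0::real^2) \<in> klein_disc" using rK_pos by (simp add: klein_disc_def)
    ultimately obtain C :: "real^2^2" where C: "\<And>xi. xi \<noteq> 0 \<Longrightarrow>
        spray_coeff funk_finsler 1 0 xi = (\<Sum>j\<in>UNIV. \<Sum>k\<in>UNIV. C $ j $ k * xi $ j * xi $ k)"
      unfolding is_berwald_on_def by blast
    have X: "(0::real^2) \<bullet> 0 < rK^2" using rK_pos by simp
    define e :: "real^2" where "e = axis 1 1"
    have e0: "e \<noteq> 0" "- e \<noteq> 0" by (simp_all add: e_def axis_eq_0_iff)
    have ee: "e \<bullet> e = 1" "(- e) \<bullet> (- e) = 1" by (simp_all add: e_def inner_axis_axis)
    have c1: "cK / (2 * rK) = C $ 1 $ 1"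
      using C[OF e0(1)] spray[OF X e0(1)] spray0[OF ee(1)]
      by (simp add: e_def sum_2 axis_ne)
    have c2: "- (cK / (2 * rK)) = C $ 1 $ 1"
      using C[OF e0(2)] spray[OF X e0(2)] spray0[OF ee(2)]
      by (simp add: e_def sum_2 axis_ne)
    have r1: "rK^2 < 1" using power_strict_mono[OF rK_lt1, of 2] rK_pos by simp
    have "cK > 0" using r1 by (simp add: cK_def)
    then show False using c1 c2 rK_pos by (simp add: field_simps)
  qed
qed

end
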